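(* Let $L$ be a finite lattice and $\varphi\in M_\infty(L)$. Then the function $U\mapsto B_\varphi(U)$ on $\mathcal L$ is the Möbius extension of $\varphi$.
   Context: $L$ is a finite lattice with meet $\wedge$. $\mathcal L$ is the set of nonempty up-sets of $L$ ordered by $U\preceq V$ iff $U\supseteq V$ (a distributive lattice with meet = union). For $a\in L$, $\langle a\rangle^*=\{x\in L:x\ge a\}$. Completely monotone: all successive differences $\nabla_{a_1,\dots,a_n}\varphi\ge0$, where $\nabla_a\varphi(x)=\varphi(x)-\varphi(x\wedge a)$ iterated. $M_1(L)$: nonnegative monotone functions on $L$; $M_\infty(L)$, $M_\infty(\mathcal L)$: nonnegative completely monotone functions on $L$, resp. on $(\mathcal L,\preceq)$. $\Pi(\Phi)(x)=\Phi(\langle x\rangle^* )$. For $\varphi\in M_1(L)$ and $U\in\mathcal L$, $B_\varphi(U)=\min\{\Phi(U):\Phi\in M_\infty(\mathcal L),\ \Pi(\Phi)=\varphi\}$. For $\varphi\in M_\infty(L)$ with Möbius inverse $f$ ($\varphi(x)=\sum_{y\le x}f(y)$), its Möbius extension is $\Phi(U)=\sum_{V\preceq U}F(V)$ where $F(\langle x\rangle^* )=f(x)$ and $F=0$ on non-principal up-sets. *)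

theory Defs
  imports Complex_Main
begin

text \<open>Nonempty up-sets of a lattice; the family \<open>\<L>\<close>. Its order is reverse inclusion,
  so its meet is union.\<close>
definition upsets :: "'a::order set set" where
  "upsets = {U. U \<noteq> {} \<and> (\<forall>x\<in>U. \<forall>y. x \<le> y \<longrightarrow> y \<in> U)}"

definition pup :: "'a::order \<Rightarrow> 'a set" where
  "pup a = {x. a \<le> x}"

fun nabla :: "('b \<Rightarrow> 'b \<Rightarrow> 'b) \<Rightarrow> 'b list \<Rightarrow> ('b \<Rightarrow> real) \<Rightarrow> 'b \<Rightarrow> real" where
  "nabla m [] \<phi> x = \<phi> x"
| "nabla m (a # as) \<phi> x = nabla m as \<phi> x - nabla m as \<phi> (m x a)"

definition compl_mono_on :: "'b set \<Rightarrow> ('b \<Rightarrow> 'b \<Rightarrow> 'b) \<Rightarrow> ('b \<Rightarrow> real) \<Rightarrow> bool" where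
  "compl_mono_on S m \<phi> \<longleftrightarrow>
     (\<forall>as x. as \<noteq> [] \<longrightarrow> set as \<subseteq> S \<longrightarrow> x \<in> S \<longrightarrow> nabla m as \<phi> x \<ge> 0)"

definition M_inf :: "('a::lattice \<Rightarrow> real) \<Rightarrow> bool" where
  "M_inf \<phi> \<longleftrightarrow> (\<forall>x. \<phi> x \<ge> 0) \<and> compl_mono_on UNIV inf \<phi>"

definition M_inf_up :: "('a::lattice set \<Rightarrow> real) \<Rightarrow> bool" where
  "M_inf_up \<Phi> \<longleftrightarrow> (\<forall>U\<in>upsets. \<Phi> U \<ge> 0) \<and> compl_mono_on upsets (\<union>) \<Phi>"

definition Pi_map :: "('a::order set \<Rightarrow> real) \<Rightarrow> 'a \<Rightarrow> real" where
  "Pi_map \<Phi> x = \<Phi> (pup x)"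

text \<open>B_phi(U) = min of Phi(U) over admissible Phi (here as an infimum; attainment is
  asserted separately in the theorem).\<close>
definition B :: "('a::lattice \<Rightarrow> real) \<Rightarrow> 'a set \<Rightarrow> real" where
  "B \<phi> U = Inf {\<Phi> U | \<Phi>. M_inf_up \<Phi> \<and> Pi_map \<Phi> = \<phi>}"

definition mobius_inv :: "('a::{finite,lattice} \<Rightarrow> real) \<Rightarrow> 'a \<Rightarrow> real" where
  "mobius_inv \<phi> = (THE f. \<forall>x. \<phi> x = (\<Sum>y\<in>{y. y \<le> x}. f y))"

definition mobF :: "('a::{finite,lattice} \<Rightarrow> real) \<Rightarrow> 'a set \<Rightarrow> real" where
  "mobF \<phi> V = (if \<exists>x. V = pup x then mobius_inv \<phi> (THE x. V = pup x) else 0)"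

definition mob_ext :: "('a::{finite,lattice} \<Rightarrow> real) \<Rightarrow> 'a set \<Rightarrow> real" where
  "mob_ext \<phi> U = (\<Sum>V\<in>{V\<in>upsets. U \<subseteq> V}. mobF \<phi> V)"

end

theory Submission
  imports Defs
begin

lemma card_less_mono:
  fixes y x :: "'a::{finite,order}"
  assumes "y < x" shows "card {z. z < y} < card {z. z < x}"
proof (rule psubset_card_mono)
  show "finite {z. z < x}" by simp
  show "{z. z < y} \<subset> {z. z < x}" using assms by (auto intro: less_trans)
qed

lemma card_le_mono:
  fixes y x :: "'a::{finite,order}"
  assumes "y \<le> x" shows "card {z. z < y} \<le> card {z. z < x}"
  by (rule card_mono) (use assms in \<open>auto intro: less_le_trans\<close>)

lemma split_le:
  fixes x :: "'a::{finite,order}"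
  shows "(\<Sum>y\<in>{y. y \<le> x}. f y) = f x + (\<Sum>y\<in>{y. y < x}. f y)"
proof -
  have "{y. y \<le> x} = insert x {y. y < x}" by auto
  then show ?thesis by simp
qed

lemma mob_exists:
  fixes \<phi> :: "'a::{finite,order} \<Rightarrow> real"
  shows "\<exists>f. \<forall>x. \<phi> x = (\<Sum>y\<in>{y. y \<le> x}. f y)"
proof -
  have "\<exists>f. \<forall>x. card {y. y < x} < n \<longrightarrow> \<phi> x = (\<Sum>y\<in>{y. y \<le> x}. f y)" for n
  proof (induction n)
    case 0 then show ?case by simp
  next
    case (Suc n)
    then obtain f where f: "\<And>x. card {y. y < x} < n \<Longrightarrow> \<phi> x = (\<Sum>y\<in>{y. y \<le> x}. f y)" by blast
    define g where "g x = (if card {y. y < x} = n then \<phi> x - (\<Sum>y\<in>{y. y < x}. f y) else f x)" for x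
    have "\<phi> x = (\<Sum>y\<in>{y. y \<le> x}. g y)" if "card {y. y < x} < Suc n" for x
    proof (cases "card {y. y < x} < n")
      case True
      have "(\<Sum>y\<in>{y. y \<le> x}. g y) = (\<Sum>y\<in>{y. y \<le> x}. f y)"
      proof (rule sum.cong)
        fix y assume "y \<in> {y. y \<le> x}"
        then have "card {z. z < y} < n" using card_le_mono[of y x] True by simp
        then show "g y = f y" by (simp add: g_def)
      qed simp
      then show ?thesis using f[OF True] by simp
    next
      case False
      then have e: "card {y. y < x} = n" using that by simp
      have "(\<Sum>y\<in>{y. y < x}. g y) = (\<Sum>y\<in>{y. y < x}. f y)"
      proof (rule sum.cong)
        fix y assume "y \<in> {y. y < x}"
        then have "card {z. z < y} < n" using card_less_mono[of y x] e by simp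
        then show "g y = f y" by (simp add: g_def)
      qed simp
      then show ?thesis by (simp add: split_le g_def e)
    qed
    then show ?case by blast
  qed
  then obtain f where "\<And>x. card {y. y < x} < Suc (card (UNIV::'a set)) \<Longrightarrow> \<phi> x = (\<Sum>y\<in>{y. y \<le> x}. f y)"
    by blast
  moreover have "card {y. y < x} < Suc (card (UNIV::'a set))" for x :: 'a
    using card_mono[of "UNIV::'a set" "{y. y < x}"] by simp
  ultimately show ?thesis by blast
qed

lemma mob_unique:
  fixes f g :: "'a::{finite,order} \<Rightarrow> real"
  assumes "\<And>x. (\<Sum>y\<in>{y. y \<le> x}. f y) = (\<Sum>y\<in>{y. y \<le> x}. g y)"
  shows "f = g"
proof -
  have "\<forall>x. card {y. y < x} < n \<longrightarrow> f x = g x" for n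
  proof (induction n)
    case 0 then show ?case by simp
  next
    case (Suc n)
    show ?case
    proof (intro allI impI)
      fix x :: 'a assume c: "card {y. y < x} < Suc n"
      have "(\<Sum>y\<in>{y. y < x}. f y) = (\<Sum>y\<in>{y. y < x}. g y)"
        using card_less_mono[of _ x] c Suc.IH by (intro sum.cong) fastforce+
      then show "f x = g x" using assms[of x] by (simp add: split_le)
    qed
  qed
  then show ?thesis
    using card_mono[of "UNIV::'a set"] by (metis finite_UNIV le_imp_less_Suc subset_UNIV ext)
qed

lemma mobius_inv_prop:
  fixes \<phi> :: "'a::{finite,lattice} \<Rightarrow> real"
  shows "\<phi> x = (\<Sum>y\<in>{y. y \<le> x}. mobius_inv \<phi> y)"
proof -
  have "\<exists>!f. \<forall>x. \<phi> x = (\<Sum>y\<in>{y. y \<le> x}. f y)"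
  proof (rule ex_ex1I)
    show "\<exists>f. \<forall>x. \<phi> x = (\<Sum>y\<in>{y. y \<le> x}. f y)" by (rule mob_exists)
  next
    fix f g assume "\<forall>x. \<phi> x = (\<Sum>y\<in>{y. y \<le> x}. f y)" "\<forall>x. \<phi> x = (\<Sum>y\<in>{y. y \<le> x}. (g::'a\<Rightarrow>real) y)"
    then show "f = g" by (intro mob_unique) simp
  qed
  then have "\<forall>x. \<phi> x = (\<Sum>y\<in>{y. y \<le> x}. mobius_inv \<phi> y)"
    unfolding mobius_inv_def by (rule theI')
  then show ?thesis by blast
qed

lemma upsets_fin: "U \<in> upsets \<Longrightarrow> finite (U::'a::{finite,order} set) \<and> U \<noteq> {}"
  by (simp add: upsets_def)

lemma pup_upsets: "pup x \<in> upsets"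
  unfolding upsets_def pup_def by (auto intro: order_trans)

lemma Inf_pup: "Inf_fin (pup (x::'a::{finite,lattice})) = x"
proof (rule antisym)
  show "Inf_fin (pup x) \<le> x" by (rule Inf_fin.coboundedI) (auto simp: pup_def)
  show "x \<le> Inf_fin (pup x)" by (rule Inf_fin.boundedI) (auto simp: pup_def)
qed

lemma U_sub_pup: "U \<in> upsets \<Longrightarrow> U \<subseteq> pup (Inf_fin (U::'a::{finite,lattice} set))"
  by (auto simp: pup_def intro: Inf_fin.coboundedI)

lemma pup_inj: "pup (x::'a::order) = pup y \<Longrightarrow> x = y"
  unfolding pup_def by (metis (mono_tags) antisym mem_Collect_eq order_refl)

lemma union_upsets: "U \<in> upsets \<Longrightarrow> A \<in> upsets \<Longrightarrow> U \<union> A \<in> upsets"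
  unfolding upsets_def by blast

lemma nabla_hom:
  fixes \<phi> :: "'a::{finite,lattice} \<Rightarrow> real"
  shows "U \<in> upsets \<Longrightarrow> set as \<subseteq> upsets \<Longrightarrow>
    nabla (\<union>) as (\<lambda>U. \<phi> (Inf_fin U)) U = nabla inf (map Inf_fin as) \<phi> (Inf_fin U)"
proof (induction as arbitrary: U)
  case Nil then show ?case by simp
next
  case (Cons a as)
  have a: "a \<in> upsets" using Cons.prems by simp
  have u: "U \<union> a \<in> upsets" using union_upsets[OF Cons.prems(1) a] .
  have "Inf_fin (U \<union> a) = inf (Inf_fin U) (Inf_fin a)"
    using upsets_fin[OF Cons.prems(1)] upsets_fin[OF a] by (simp add: Inf_fin.union)
  then show ?case using Cons.IH[OF Cons.prems(1)] Cons.IH[OF u] Cons.prems(2) by simp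
qed

theorem proposition3p7:
  fixes \<phi> :: "'a::{finite,lattice} \<Rightarrow> real"
  assumes "M_inf \<phi>"
  shows "\<forall>U\<in>upsets.
           (\<exists>\<Phi>. M_inf_up \<Phi> \<and> Pi_map \<Phi> = \<phi> \<and> \<Phi> U = B \<phi> U)
         \<and> B \<phi> U = mob_ext \<phi> U"
proof -
  define \<Psi> where "\<Psi> = (\<lambda>U. \<phi> (Inf_fin U))"
  have nn: "\<And>x. \<phi> x \<ge> 0" and cm: "compl_mono_on UNIV inf \<phi>"
    using assms by (auto simp: M_inf_def)
  have PsiM: "M_inf_up \<Psi>"
    unfolding M_inf_up_def compl_mono_on_def
  proof (intro conjI ballI allI impI)
    fix U :: "'a set" show "\<Psi> U \<ge> 0" by (simp add: \<Psi>_def nn)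
  next
    fix as :: "'a set list" and x :: "'a set"
    assume "as \<noteq> []" "set as \<subseteq> upsets" "x \<in> upsets"
    then show "nabla (\<union>) as \<Psi> x \<ge> 0"
      using nabla_hom[of x as \<phi>] cm unfolding compl_mono_on_def \<Psi>_def by simp
  qed
  have PsiPi: "Pi_map \<Psi> = \<phi>"
    by (rule ext) (simp add: Pi_map_def \<Psi>_def Inf_pup)
  have low: "\<phi> (Inf_fin U) \<le> \<Phi> U" if "M_inf_up \<Phi>" "Pi_map \<Phi> = \<phi>" "U \<in> upsets" for \<Phi> U
  proof -
    let ?m = "Inf_fin U"
    have "nabla (\<union>) [pup ?m] \<Phi> U \<ge> 0"
    proof -
      have "compl_mono_on upsets (\<union>) \<Phi>" using that(1) by (simp add: M_inf_up_def)
      then have "\<forall>as x. as \<noteq> [] \<longrightarrow> set as \<subseteq> upsets \<longrightarrow> x \<in> upsets \<longrightarrow> nabla (\<union>) as \<Phi> x \<ge> 0"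
        by (simp only: compl_mono_on_def)
      then have "[pup ?m] \<noteq> [] \<longrightarrow> set [pup ?m] \<subseteq> upsets \<longrightarrow> U \<in> upsets \<longrightarrow> nabla (\<union>) [pup ?m] \<Phi> U \<ge> 0"
        by blast
      then show ?thesis using pup_upsets[of ?m] that(3) by simp
    qed
    moreover have "U \<union> pup ?m = pup ?m" using U_sub_pup[OF that(3)] by blast
    moreover have "\<Phi> (pup ?m) = \<phi> ?m" using that(2) by (auto simp: Pi_map_def)
    ultimately show ?thesis by simp
  qed
  have Beq: "B \<phi> U = \<phi> (Inf_fin U)" if "U \<in> upsets" for U
    unfolding B_def
  proof (rule cInf_eq_minimum)
    show "\<phi> (Inf_fin U) \<in> {\<Phi> U |\<Phi>. M_inf_up \<Phi> \<and> Pi_map \<Phi> = \<phi>}"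
      using PsiM PsiPi by (auto simp: \<Psi>_def)
  next
    fix x assume "x \<in> {\<Phi> U |\<Phi>. M_inf_up \<Phi> \<and> Pi_map \<Phi> = \<phi>}"
    then show "\<phi> (Inf_fin U) \<le> x" using low that by blast
  qed
  have mobeq: "mob_ext \<phi> U = \<phi> (Inf_fin U)" if U: "U \<in> upsets" for U
  proof -
    let ?m = "Inf_fin U"
    let ?S = "{V\<in>upsets. U \<subseteq> V}"
    have sub: "pup ` {x. x \<le> ?m} \<subseteq> ?S"
      using U_sub_pup[OF U] pup_upsets by (auto simp: pup_def)
    have zero: "\<forall>V\<in>?S - pup ` {x. x \<le> ?m}. mobF \<phi> V = 0"
    proof
      fix V assume V: "V \<in> ?S - pup ` {x. x \<le> ?m}"
      show "mobF \<phi> V = 0"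
      proof (cases "\<exists>x. V = pup x")
        case True
        then obtain x where x: "V = pup x" by blast
        then have "U \<subseteq> pup x" using V by simp
        then have "x \<le> ?m" using upsets_fin[OF U] by (intro Inf_fin.boundedI) (auto simp: pup_def)
        then show ?thesis using V x by auto
      qed (simp add: mobF_def)
    qed
    have "mob_ext \<phi> U = (\<Sum>V\<in>pup ` {x. x \<le> ?m}. mobF \<phi> V)"
      unfolding mob_ext_def by (rule sum.mono_neutral_right[OF _ sub zero]) simp
    also have "\<dots> = (\<Sum>x\<in>{x. x \<le> ?m}. mobF \<phi> (pup x))"
      by (rule sum.reindex_cong[where l=pup]) (auto intro: inj_onI pup_inj)
    also have "\<dots> = (\<Sum>x\<in>{x. x \<le> ?m}. mobius_inv \<phi> x)"
    proof (rule sum.cong)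
      fix x assume "x \<in> {x. x \<le> ?m}"
      have "(THE y. pup x = pup y) = x" by (rule the_equality) (auto dest: pup_inj)
      then show "mobF \<phi> (pup x) = mobius_inv \<phi> x" by (auto simp: mobF_def)
    qed simp
    also have "\<dots> = \<phi> ?m" using mobius_inv_prop[of \<phi> ?m] by simp
    finally show ?thesis .
  qed
  show ?thesis
  proof
    fix U :: "'a set" assume U: "U \<in> upsets"
    show "(\<exists>\<Phi>. M_inf_up \<Phi> \<and> Pi_map \<Phi> = \<phi> \<and> \<Phi> U = B \<phi> U) \<and> B \<phi> U = mob_ext \<phi> U"
      using PsiM PsiPi Beq[OF U] mobeq[OF U] by (auto simp: \<Psi>_def)
  qed
qed

end
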